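(* Let $\mathbf{X}$ and $\mathbf{Y}$ be Euclidean spaces, let $Q\subset\mathbf{Y}$ be a nonempty closed set, let $F\colon\mathbf{X}\to\mathbf{Y}$, and let $\bar x\in\mathbf{X}$. Suppose that $F$ is continuously differentiable around $\bar x$ with one-to-one derivative $\nabla F(\bar x)$, that $F(\bar x)\in Q$, and that there exists an angle $\alpha>0$ such that whenever two vectors $x,x'\in\mathbf{X}$ near $\bar x$ satisfy \[ \nabla F(x')^*\big(y-F(x')\big)=0\quad\text{and}\quad F(x)\neq y\neq F(x')\quad\text{for some } y\in P_Q\big(F(x)\big), \] then the angle between the vectors $F(x)-y$ and $F(x')-y$ is at least $\alpha$. Consider the linearized alternating projections method: given the current iterate $x$, while $F(x)\notin Q$, choose $y\in P_Q(F(x))$, choose $s\in\mathbf{X}$ minimizing $|F(x)+\nabla F(x)s-y|$, and set $x\leftarrow x+s$. Then, starting from any point $x\in\mathbf{X}$ sufficiently close to $\bar x$, this method converges linearly to a point in the solution set $F^{-1}(Q)$.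
   Context: $P_Q(v)$ denotes the set of nearest points of $Q$ to $v$; ${}^*$ denotes the adjoint of a linear map. A sequence $(x^k)$ converges linearly to $\hat x$ if there exist constants $c\in(0,1)$ and $\rho>0$ with $|x^k-\hat x|<\rho c^k$ for all $k$. *)

theory Defs
  imports "HOL-Analysis.Analysis"
begin

definition proj_set :: "'a::real_normed_vector set \<Rightarrow> 'a \<Rightarrow> 'a set" where
  "proj_set Q v = {q \<in> Q. \<forall>q'\<in>Q. norm (v - q) \<le> norm (v - q')}"

definition vec_angle :: "'a::real_inner \<Rightarrow> 'a \<Rightarrow> real" where
  "vec_angle u v = arccos ((u \<bullet> v) / (norm u * norm v))"

definition converges_linearly :: "(nat \<Rightarrow> 'a::real_normed_vector) \<Rightarrow> 'a \<Rightarrow> bool" where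
  "converges_linearly xs xhat \<longleftrightarrow>
     (\<exists>c \<rho>. 0 < c \<and> c < 1 \<and> 0 < \<rho> \<and> (\<forall>k. norm (xs k - xhat) < \<rho> * c ^ k))"

text \<open>One step of the linearized alternating projections method, with derivative F'.
  If F x is already in Q the method has stopped; we then keep the iterate constant.\<close>
definition lap_step :: "('a::euclidean_space \<Rightarrow> 'b::euclidean_space) \<Rightarrow> ('a \<Rightarrow> ('a \<Rightarrow>\<^sub>L 'b))
    \<Rightarrow> 'b set \<Rightarrow> 'a \<Rightarrow> 'a \<Rightarrow> bool" where
  "lap_step F F' Q x x_next \<longleftrightarrow>
     (if F x \<in> Q then x_next = x
      else (\<exists>y \<in> proj_set Q (F x). \<exists>s.
              (\<forall>s'. norm (F x + F' x s - y) \<le> norm (F x + F' x s' - y)) \<and>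
              x_next = x + s))"

end

theory Submission
  imports Defs
begin

lemma proj_le_infdist:
  assumes "y \<in> proj_set Q v"
  shows "norm (v - y) \<le> infdist v Q" "y \<in> Q"
proof -
  have yQ: "y \<in> Q" and ym: "\<forall>q\<in>Q. norm (v - y) \<le> norm (v - q)"
    using assms unfolding proj_set_def by auto
  then have "Q \<noteq> {}" by auto
  then have "infdist v Q = (INF a\<in>Q. dist v a)" unfolding infdist_def by simp
  moreover have "norm (v - y) \<le> (INF a\<in>Q. dist v a)"
    using \<open>Q \<noteq> {}\<close> ym by (intro cINF_greatest) (auto simp: dist_norm)
  ultimately show "norm (v - y) \<le> infdist v Q" by simp
  show "y \<in> Q" by fact
qed

lemma adjoint_zero:
  fixes A :: "'a::euclidean_space \<Rightarrow>\<^sub>L 'b::euclidean_space"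
  assumes "\<And>h. w \<bullet> blinfun_apply A h = 0"
  shows "adjoint (blinfun_apply A) w = 0"
proof -
  let ?z = "adjoint (blinfun_apply A) w"
  have lin: "linear (blinfun_apply A)"
    using blinfun.bounded_linear_right bounded_linear.linear by blast
  have "?z \<bullet> ?z = blinfun_apply A ?z \<bullet> w" using adjoint_works[OF lin] by blast
  also have "\<dots> = 0" using assms[of ?z] by (simp add: inner_commute)
  finally show ?thesis by simp
qed

lemma angle_cos_bound:
  fixes v n :: "'b::real_inner"
  assumes "v \<noteq> 0" "n \<noteq> 0" "vec_angle v n \<ge> \<beta>" "0 \<le> \<beta>"
  shows "v \<bullet> n \<le> cos \<beta> * (norm v * norm n)"
proof -
  let ?t = "(v \<bullet> n) / (norm v * norm n)"
  have pos: "norm v * norm n > 0" using assms by simp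
  have cs: "\<bar>v \<bullet> n\<bar> \<le> norm v * norm n" by (rule Cauchy_Schwarz_ineq2)
  have t1: "-1 \<le> ?t" "?t \<le> 1" using cs pos by (auto simp: divide_simps abs_le_iff)
  have "cos (vec_angle v n) \<le> cos \<beta>"
    apply (rule cos_monotone_0_pi_le)
    using assms t1 arccos_ubound[of ?t] unfolding vec_angle_def by auto
  then have "?t \<le> cos \<beta>" using t1 unfolding vec_angle_def by simp
  then show ?thesis using pos by (simp add: divide_simps)
qed

lemma lap_one_step:
  fixes F :: "'a::euclidean_space \<Rightarrow> 'b::euclidean_space"
    and F' :: "'a \<Rightarrow> ('a \<Rightarrow>\<^sub>L 'b)"
  assumes Fxbar: "F xbar \<in> Q"
    and deriv: "\<And>z. norm (z - xbar) < r \<Longrightarrow> (F has_derivative blinfun_apply (F' z)) (at z)"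
    and E: "\<And>a b z. norm (a - xbar) < r \<Longrightarrow> norm (b - xbar) < r \<Longrightarrow> norm (z - xbar) < r \<Longrightarrow>
              norm (F a - F b - F' z (a - b)) \<le> \<eta> * norm (a - b)"
    and lowF: "\<And>a b. norm (a - xbar) < r \<Longrightarrow> norm (b - xbar) < r \<Longrightarrow> m * norm (a - b) \<le> norm (F a - F b)"
    and lowD: "\<And>z h. norm (z - xbar) < r \<Longrightarrow> m * norm h \<le> norm (F' z h)"
    and Lip: "\<And>a. norm (a - xbar) < r \<Longrightarrow> norm (F a - F xbar) \<le> L * norm (a - xbar)"
    and mpos: "m > 0" and Lpos: "L > 0" and eta: "\<eta> \<ge> 0" and rho: "0 < \<rho>" "\<rho> < r" and rdel: "r \<le> \<delta>"
    and angle: "\<forall>x x' y.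
        x \<in> ball xbar \<delta> \<longrightarrow> x' \<in> ball xbar \<delta> \<longrightarrow> y \<in> proj_set Q (F x) \<longrightarrow>
        adjoint (blinfun_apply (F' x')) (y - F x') = 0 \<longrightarrow> F x \<noteq> y \<longrightarrow> y \<noteq> F x' \<longrightarrow>
        vec_angle (F x - y) (F x' - y) \<ge> \<beta>"
    and beta: "0 \<le> \<beta>" "\<beta> \<le> pi/2"
    and xin: "norm (x - xbar) * (1 + 3 * L / m) < \<rho>"
    and FxQ: "F x \<notin> Q" and yP: "y \<in> proj_set Q (F x)"
    and smin: "\<forall>s'. norm (F x + F' x s - y) \<le> norm (F x + F' x s' - y)"
  shows "norm (F (x + s) - y) \<le> (cos \<beta> + 6 * \<eta> / m) * norm (F x - y)"
    and "m * norm s \<le> 2 * norm (F x - y)"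
proof -
  define v where "v = F x - y"
  have yQ: "y \<in> Q" and ym: "\<forall>q\<in>Q. norm (F x - y) \<le> norm (F x - q)"
    using yP unfolding proj_set_def by auto
  have fac: "norm (x - xbar) \<le> norm (x - xbar) * (1 + 3 * L / m)"
    using mpos Lpos by (simp add: field_simps)
  have xrho: "norm (x - xbar) < \<rho>" using xin fac by linarith
  have xr: "norm (x - xbar) < r" using xrho rho by linarith
  have vL: "norm v \<le> L * norm (x - xbar)"
    using ym Fxbar Lip[OF xr] unfolding v_def by force
  have cont: "continuous_on (cball xbar \<rho>) (\<lambda>z. norm (F z - y))"
  proof (intro continuous_on_norm continuous_on_diff continuous_on_const continuous_at_imp_continuous_on ballI)
    fix z assume "z \<in> cball xbar \<rho>"
    then have "norm (z - xbar) < r" using rho by (simp add: dist_norm norm_minus_commute)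
    then show "isCont F z" using deriv has_derivative_continuous by blast
  qed
  obtain x' where x'c: "x' \<in> cball xbar \<rho>" and x'min: "\<forall>z\<in>cball xbar \<rho>. norm (F x' - y) \<le> norm (F z - y)"
    using continuous_attains_inf[OF compact_cball _ cont] rho by fastforce
  define n where "n = F x' - y"
  have x'r: "norm (x' - xbar) < r" using x'c rho by (simp add: dist_norm norm_minus_commute)
  have nv: "norm n \<le> norm v"
    using x'min xrho unfolding n_def v_def by (simp add: dist_norm norm_minus_commute)
  have "m * norm (x' - xbar) \<le> norm (F x' - F xbar)" using lowF[OF x'r, of xbar] rho by simp
  also have "\<dots> \<le> norm n + norm v + norm (F x - F xbar)"
  proof -
    have "F x' - F xbar = (n - v) + (F x - F xbar)" unfolding n_def v_def by simp
    then have "norm (F x' - F xbar) \<le> norm (n - v) + norm (F x - F xbar)"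
      using norm_triangle_ineq by metis
    then show ?thesis using norm_triangle_ineq4[of n v] by linarith
  qed
  also have "\<dots> \<le> 3 * L * norm (x - xbar)" using nv vL Lip[OF xr] by linarith
  finally have "m * norm (x' - xbar) \<le> 3 * L * norm (x - xbar)" .
  then have "norm (x' - xbar) \<le> 3 * L / m * norm (x - xbar)"
    using mpos by (simp add: field_simps)
  moreover have "norm (x - xbar) + 3 * L / m * norm (x - xbar) < \<rho>" using xin by (simp add: algebra_simps)
  ultimately have x'rho: "norm (x' - xbar) < \<rho>" using norm_ge_zero[of "x - xbar"] by linarith
  have der: "((\<lambda>z. (F z - y) \<bullet> (F z - y)) has_derivative
      (\<lambda>h. (F x' - y) \<bullet> F' x' h + F' x' h \<bullet> (F x' - y))) (at x')"
    using deriv[OF x'r] by (auto intro!: derivative_eq_intros)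
  have evmin: "eventually (\<lambda>z. (F x' - y) \<bullet> (F x' - y) \<le> (F z - y) \<bullet> (F z - y)) (at x')"
  proof -
    have "eventually (\<lambda>z. z \<in> ball xbar \<rho>) (at x')"
      using x'rho by (intro eventually_at_in_open') (auto simp: dist_norm norm_minus_commute)
    then show ?thesis
    proof (rule eventually_mono)
      fix z assume "z \<in> ball xbar \<rho>"
      then have "norm (F x' - y) \<le> norm (F z - y)" using x'min by auto
      then show "(F x' - y) \<bullet> (F x' - y) \<le> (F z - y) \<bullet> (F z - y)"
        by (simp add: power_mono flip: power2_norm_eq_inner)
    qed
  qed
  have zero: "(\<lambda>h. (F x' - y) \<bullet> F' x' h + F' x' h \<bullet> (F x' - y)) = (\<lambda>h. 0)"
    by (rule has_derivative_local_min[OF der evmin])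
  have orth: "\<And>h. n \<bullet> F' x' h = 0"
  proof -
    fix h
    have "(F x' - y) \<bullet> F' x' h + F' x' h \<bullet> (F x' - y) = 0" using fun_cong[OF zero, of h] by simp
    then show "n \<bullet> F' x' h = 0" unfolding n_def by (simp add: inner_commute)
  qed
  have adj: "adjoint (blinfun_apply (F' x')) (y - F x') = 0"
  proof (rule adjoint_zero)
    fix h show "(y - F x') \<bullet> F' x' h = 0" using orth[of h] unfolding n_def
      by (metis inner_minus_left minus_diff_eq neg_equal_0_iff_equal)
  qed
  have "m * norm (x - x') \<le> norm (F x - F x')" using lowF[OF xr x'r] .
  also have "\<dots> \<le> norm v + norm n"
  proof -
    have "F x - F x' = v - n" unfolding v_def n_def by simp
    then show ?thesis using norm_triangle_ineq4[of v n] by simp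
  qed
  also have "\<dots> \<le> 2 * norm v" using nv by simp
  finally have dxx: "m * norm (x - x') \<le> 2 * norm v" .
  define e1 where "e1 = F x - F x' - F' x' (x - x')"
  have e1b: "norm e1 \<le> \<eta> * norm (x - x')" unfolding e1_def using E[OF xr x'r x'r] .
  have nb: "norm n \<le> cos \<beta> * norm v + norm e1"
  proof (cases "n = 0")
    case True
    have "0 \<le> cos \<beta>" using beta by (intro cos_ge_zero) auto
    then show ?thesis using True by simp
  next
    case False
    have vne: "v \<noteq> 0" using FxQ yQ unfolding v_def by auto
    have xd: "x \<in> ball xbar \<delta>" "x' \<in> ball xbar \<delta>" using xr x'r rdel
      by (auto simp: dist_norm norm_minus_commute)
    have "vec_angle v n \<ge> \<beta>" using angle xd yP adj vne False unfolding v_def n_def by auto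
    then have ang: "v \<bullet> n \<le> cos \<beta> * (norm v * norm n)"
      using angle_cos_bound[OF vne False] beta by auto
    have veq: "v = n + F' x' (x - x') + e1" unfolding v_def n_def e1_def by simp
    have "v \<bullet> n = n \<bullet> n + F' x' (x - x') \<bullet> n + e1 \<bullet> n" unfolding veq
      by (simp only: inner_add_left)
    moreover have "F' x' (x - x') \<bullet> n = 0" using orth[of "x - x'"] by (simp add: inner_commute)
    ultimately have "v \<bullet> n = n \<bullet> n + e1 \<bullet> n" by simp
    moreover have "e1 \<bullet> n \<ge> - (norm e1 * norm n)"
      using Cauchy_Schwarz_ineq2[of e1 n] by linarith
    moreover have "n \<bullet> n = norm n * norm n" by (simp add: power2_eq_square flip: power2_norm_eq_inner)
    ultimately have "norm n * norm n \<le> (cos \<beta> * norm v + norm e1) * norm n"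
      using ang by (simp add: algebra_simps)
    then show ?thesis using False by simp
  qed
  define e2 where "e2 = F x - F x' - F' x (x - x')"
  have e2b: "norm e2 \<le> \<eta> * norm (x - x')" unfolding e2_def using E[OF xr x'r xr] .
  have "norm (F x + F' x s - y) \<le> norm (F x + F' x (x' - x) - y)" using smin by blast
  also have "F x + F' x (x' - x) - y = n + e2"
    unfolding n_def e2_def by (simp add: blinfun.diff_right)
  also have "norm (n + e2) \<le> norm n + norm e2" by (rule norm_triangle_ineq)
  finally have res1: "norm (F x + F' x s - y) \<le> norm n + norm e2" .
  have eta_xx: "\<eta> * norm (x - x') \<le> 2 * \<eta> / m * norm v"
  proof -
    have "\<eta> * (m * norm (x - x')) \<le> \<eta> * (2 * norm v)" using dxx eta by (rule mult_left_mono)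
    then show ?thesis using mpos by (simp add: field_simps)
  qed
  have res: "norm (F x + F' x s - y) \<le> (cos \<beta> + 4 * \<eta> / m) * norm v"
  proof -
    have "(cos \<beta> + 4 * \<eta> / m) * norm v = cos \<beta> * norm v + 2 * (2 * \<eta> / m * norm v)"
      by (simp add: algebra_simps)
    then show ?thesis using res1 nb e1b e2b eta_xx by linarith
  qed
  have res0: "norm (F x + F' x s - y) \<le> norm v"
    using smin[rule_format, of 0] unfolding v_def by simp
  have "norm (F' x s) \<le> norm (F x + F' x s - y) + norm v"
  proof -
    have "F' x s = (F x + F' x s - y) - v" unfolding v_def by simp
    then show ?thesis using norm_triangle_ineq4[of "F x + F' x s - y" v] by (simp only:)
  qed
  then have "norm (F' x s) \<le> 2 * norm v" using res0 by linarith
  then have ms: "m * norm s \<le> 2 * norm v" using lowD[OF xr, of s] by linarith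
  then show "m * norm s \<le> 2 * norm (F x - y)" unfolding v_def .
  have sb: "norm s \<le> 2 * L / m * norm (x - xbar)"
  proof -
    have "m * norm s \<le> 2 * L * norm (x - xbar)" using ms vL by linarith
    then show ?thesis using mpos by (simp add: field_simps)
  qed
  have "3 * L / m * norm (x - xbar) \<ge> 2 * L / m * norm (x - xbar)"
    using mpos Lpos by (intro mult_right_mono) (auto simp: divide_simps)
  moreover have "norm (x - xbar) + 3 * L / m * norm (x - xbar) < \<rho>" using xin by (simp add: algebra_simps)
  ultimately have "norm (x - xbar) + norm s < \<rho>" using sb by linarith
  moreover have "norm (x + s - xbar) \<le> norm (x - xbar) + norm s"
  proof -
    have "x + s - xbar = (x - xbar) + s" by simp
    then show ?thesis using norm_triangle_ineq[of "x - xbar" s] by (simp only:)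
  qed
  ultimately have xsr: "norm (x + s - xbar) < r" using rho by linarith
  have e3: "norm (F (x + s) - F x - F' x s) \<le> \<eta> * norm s"
    using E[OF xsr xr xr] by simp
  have "\<eta> * norm s \<le> 2 * \<eta> / m * norm v"
  proof -
    have "\<eta> * (m * norm s) \<le> \<eta> * (2 * norm v)" using ms eta by (rule mult_left_mono)
    then show ?thesis using mpos by (simp add: field_simps)
  qed
  moreover have "norm (F (x + s) - y) \<le> norm (F x + F' x s - y) + norm (F (x + s) - F x - F' x s)"
  proof -
    have "F (x + s) - y = (F x + F' x s - y) + (F (x + s) - F x - F' x s)" by simp
    then show ?thesis using norm_triangle_ineq by metis
  qed
  ultimately have fin: "norm (F (x + s) - y) \<le> (cos \<beta> + 4 * \<eta> / m) * norm v + 2 * \<eta> / m * norm v"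
    using res e3 by linarith
  then show "norm (F (x + s) - y) \<le> (cos \<beta> + 6 * \<eta> / m) * norm (F x - y)"
  proof -
    have "(cos \<beta> + 6 * \<eta> / m) * norm v = (cos \<beta> + 4 * \<eta> / m) * norm v + 2 * \<eta> / m * norm v"
      by (simp add: algebra_simps)
    then show ?thesis using fin unfolding v_def by linarith
  qed
qed

theorem mainTheorem4:
  fixes F :: "'a::euclidean_space \<Rightarrow> 'b::euclidean_space"
    and F' :: "'a \<Rightarrow> ('a \<Rightarrow>\<^sub>L 'b)"
    and Q :: "'b set"
    and xbar :: 'a
  assumes Q_ne: "Q \<noteq> {}"
    and Q_closed: "closed Q"
    and C1: "\<exists>U. open U \<and> xbar \<in> U \<and> (\<forall>x\<in>U. (F has_derivative blinfun_apply (F' x)) (at x))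
                 \<and> continuous_on U F'"
    and inj_deriv: "inj (blinfun_apply (F' xbar))"
    and Fxbar: "F xbar \<in> Q"
    and angle_cond: "\<exists>\<alpha>>0. \<exists>\<delta>>0. \<forall>x x' y.
        x \<in> ball xbar \<delta> \<longrightarrow> x' \<in> ball xbar \<delta> \<longrightarrow> y \<in> proj_set Q (F x) \<longrightarrow>
        adjoint (blinfun_apply (F' x')) (y - F x') = 0 \<longrightarrow> F x \<noteq> y \<longrightarrow> y \<noteq> F x' \<longrightarrow>
        vec_angle (F x - y) (F x' - y) \<ge> \<alpha>"
  shows "\<exists>\<epsilon>>0. \<forall>xs :: nat \<Rightarrow> 'a.
           xs 0 \<in> ball xbar \<epsilon> \<longrightarrow> (\<forall>k. lap_step F F' Q (xs k) (xs (Suc k))) \<longrightarrow>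
           (\<exists>xhat. F xhat \<in> Q \<and> converges_linearly xs xhat)"
proof -
  obtain U where U: "open U" "xbar \<in> U" "\<forall>x\<in>U. (F has_derivative blinfun_apply (F' x)) (at x)"
      "continuous_on U F'" using C1 by blast
  obtain \<alpha> \<delta> where apos: "\<alpha> > 0" and dpos: "\<delta> > 0" and ang: "\<forall>x x' y.
        x \<in> ball xbar \<delta> \<longrightarrow> x' \<in> ball xbar \<delta> \<longrightarrow> y \<in> proj_set Q (F x) \<longrightarrow>
        adjoint (blinfun_apply (F' x')) (y - F x') = 0 \<longrightarrow> F x \<noteq> y \<longrightarrow> y \<noteq> F x' \<longrightarrow>
        vec_angle (F x - y) (F x' - y) \<ge> \<alpha>" using angle_cond by blast
  define \<beta> where "\<beta> = min \<alpha> (pi/2)"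
  have beta: "0 < \<beta>" "\<beta> \<le> pi/2" using apos unfolding \<beta>_def by auto
  have ang': "\<forall>x x' y.
        x \<in> ball xbar \<delta> \<longrightarrow> x' \<in> ball xbar \<delta> \<longrightarrow> y \<in> proj_set Q (F x) \<longrightarrow>
        adjoint (blinfun_apply (F' x')) (y - F x') = 0 \<longrightarrow> F x \<noteq> y \<longrightarrow> y \<noteq> F x' \<longrightarrow>
        vec_angle (F x - y) (F x' - y) \<ge> \<beta>"
    using ang unfolding \<beta>_def by (meson min.coboundedI1)
  have cb1: "cos \<beta> < 1" using cos_monotone_0_pi[of 0 \<beta>] beta pi_gt_zero by simp
  have cb0: "0 \<le> cos \<beta>" using beta by (intro cos_ge_zero) auto
  have lin: "linear (blinfun_apply (F' xbar))"
    using blinfun.bounded_linear_right bounded_linear.linear by blast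
  obtain B where Bpos: "B > 0" and Bb: "\<And>h. B * norm h \<le> norm (F' xbar h)"
    using linear_inj_bounded_below_pos[OF lin inj_deriv] by blast
  define m where "m = B / 2"
  have mpos: "m > 0" using Bpos m_def by simp
  define \<eta> where "\<eta> = min m (m * (1 - cos \<beta>) / 12)"
  have etapos: "\<eta> > 0" using mpos cb1 unfolding \<eta>_def by auto
  have etam: "\<eta> \<le> m" unfolding \<eta>_def by simp
  have eta6: "6 * \<eta> / m \<le> (1 - cos \<beta>) / 2"
  proof -
    have "\<eta> \<le> m * (1 - cos \<beta>) / 12" unfolding \<eta>_def by simp
    then show ?thesis using mpos by (simp add: field_simps)
  qed
  define c where "c = cos \<beta> + 6 * \<eta> / m"
  have c1: "c < 1"
  proof -
    have "c \<le> cos \<beta> + (1 - cos \<beta>) / 2" using eta6 unfolding c_def by simp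
    then show ?thesis using cb1 by (simp add: field_simps)
  qed
  have c0: "0 < c" using cb0 etapos mpos unfolding c_def by (simp add: add_nonneg_pos)
  have "isCont F' xbar" using U continuous_on_eq_continuous_at by blast
  then have "\<forall>e>0. eventually (\<lambda>z. dist (F' z) (F' xbar) < e) (at xbar)"
    unfolding isCont_def tendsto_iff by blast
  then have "eventually (\<lambda>z. dist (F' z) (F' xbar) < \<eta>/2) (at xbar)"
    using etapos half_gt_zero[of \<eta>] by blast
  then obtain r1 where r1: "r1 > 0" "\<And>z. z \<noteq> xbar \<Longrightarrow> dist z xbar < r1 \<Longrightarrow> dist (F' z) (F' xbar) < \<eta>/2"
    unfolding eventually_at by auto
  obtain r2 where r2: "r2 > 0" "ball xbar r2 \<subseteq> U" using U open_contains_ball by blast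
  define r where "r = min (min r1 r2) \<delta>"
  have rpos: "r > 0" using r1 r2 dpos unfolding r_def by simp
  have rdel: "r \<le> \<delta>" unfolding r_def by simp
  have inU: "z \<in> U" if "norm (z - xbar) < r" for z
    using that r2 unfolding r_def by (auto simp: dist_norm norm_minus_commute)
  have deriv: "(F has_derivative blinfun_apply (F' z)) (at z)" if "norm (z - xbar) < r" for z
    using U inU[OF that] by blast
  have Dclose: "norm (F' z - F' xbar) \<le> \<eta>/2" if "norm (z - xbar) < r" for z
  proof (cases "z = xbar")
    case True then show ?thesis using etapos by simp
  next
    case False
    have "dist z xbar < r1" using that unfolding r_def by (simp add: dist_norm)
    then show ?thesis using r1(2)[OF False] by (simp add: dist_norm)
  qed
  have MV: "norm (F a - F b - F' xbar (a - b)) \<le> \<eta>/2 * norm (a - b)"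
    if a: "norm (a - xbar) < r" and b: "norm (b - xbar) < r" for a b
  proof -
    have seg: "b + t *\<^sub>R (a - b) \<in> ball xbar r" if "t \<in> {0..1}" for t
    proof -
      have "(1 - t) *\<^sub>R b + t *\<^sub>R a \<in> ball xbar r"
        using convex_ball[of xbar r, unfolded convex_alt] a b that
        by (auto simp: dist_norm norm_minus_commute)
      moreover have "(1 - t) *\<^sub>R b + t *\<^sub>R a = b + t *\<^sub>R (a - b)" by (simp add: algebra_simps)
      ultimately show ?thesis by simp
    qed
    have dS: "(F has_derivative blinfun_apply (F' z)) (at z within ball xbar r)" if "z \<in> ball xbar r" for z
      using deriv[of z] that has_derivative_at_withinI by (auto simp: dist_norm norm_minus_commute)
    have oB: "onorm (blinfun_apply (F' z) - blinfun_apply (F' xbar)) \<le> \<eta>/2" if "z \<in> ball xbar r" for z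
    proof -
      have "onorm (blinfun_apply (F' z) - blinfun_apply (F' xbar)) = norm (F' z - F' xbar)"
        by (simp add: norm_blinfun.rep_eq minus_blinfun.rep_eq fun_diff_def)
      then show ?thesis using Dclose[of z] that by (simp add: dist_norm norm_minus_commute)
    qed
    have "norm (F a - F b - F' xbar (a - b)) \<le> norm (a - b) * (\<eta>/2)"
      by (rule differentiable_bound_linearization[of b a "ball xbar r" F "\<lambda>z. blinfun_apply (F' z)" xbar "\<eta>/2"])
        (use seg dS oB rpos in auto)
    then show ?thesis by (simp add: mult.commute)
  qed
  have E: "norm (F a - F b - F' z (a - b)) \<le> \<eta> * norm (a - b)"
    if a: "norm (a - xbar) < r" and b: "norm (b - xbar) < r" and z: "norm (z - xbar) < r" for a b z
  proof -
    have eq: "F a - F b - F' z (a - b) = (F a - F b - F' xbar (a - b)) - (F' z - F' xbar) (a - b)"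
      by (simp add: minus_blinfun.rep_eq)
    have "norm ((F' z - F' xbar) (a - b)) \<le> norm (F' z - F' xbar) * norm (a - b)" by (rule norm_blinfun)
    also have "\<dots> \<le> \<eta>/2 * norm (a - b)" using Dclose[OF z] by (intro mult_right_mono) auto
    finally have "norm ((F' z - F' xbar) (a - b)) \<le> \<eta>/2 * norm (a - b)" .
    moreover have "norm (F a - F b - F' z (a - b)) \<le> norm (F a - F b - F' xbar (a - b)) + norm ((F' z - F' xbar) (a - b))"
      using eq norm_triangle_ineq4[of "F a - F b - F' xbar (a - b)" "(F' z - F' xbar) (a - b)"] by (simp only:)
    ultimately show ?thesis using MV[OF a b] by linarith
  qed
  have lowD: "m * norm h \<le> norm (F' z h)" if z: "norm (z - xbar) < r" for z h
  proof -
    have eq: "F' xbar h = F' z h - (F' z - F' xbar) h" by (simp add: minus_blinfun.rep_eq)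
    have "norm ((F' z - F' xbar) h) \<le> norm (F' z - F' xbar) * norm h" by (rule norm_blinfun)
    also have "\<dots> \<le> \<eta>/2 * norm h" using Dclose[OF z] by (intro mult_right_mono) auto
    finally have n1: "norm ((F' z - F' xbar) h) \<le> \<eta>/2 * norm h" .
    have "norm (F' xbar h) \<le> norm (F' z h) + norm ((F' z - F' xbar) h)"
      using eq norm_triangle_ineq4[of "F' z h" "(F' z - F' xbar) h"] by (simp only:)
    moreover have "\<eta>/2 * norm h \<le> m * norm h" using etam mpos by (intro mult_right_mono) auto
    ultimately show ?thesis using Bb[of h] n1 unfolding m_def by linarith
  qed
  have lowF: "m * norm (a - b) \<le> norm (F a - F b)"
    if a: "norm (a - xbar) < r" and b: "norm (b - xbar) < r" for a b
  proof -
    have "norm (F' xbar (a - b)) \<le> norm (F a - F b) + norm (F a - F b - F' xbar (a - b))"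
      using norm_triangle_ineq4[of "F a - F b" "F a - F b - F' xbar (a - b)"] by simp
    moreover have "\<eta>/2 * norm (a - b) \<le> m * norm (a - b)" using etam mpos by (intro mult_right_mono) auto
    ultimately show ?thesis using Bb[of "a - b"] MV[OF a b] unfolding m_def by linarith
  qed
  define L where "L = norm (F' xbar) + \<eta>"
  have Lpos: "L > 0" using etapos unfolding L_def by (simp add: add_nonneg_pos)
  have Lip: "norm (F a - F xbar) \<le> L * norm (a - xbar)" if a: "norm (a - xbar) < r" for a
  proof -
    have "norm (F a - F xbar) \<le> norm (F' xbar (a - xbar)) + norm (F a - F xbar - F' xbar (a - xbar))"
      using norm_triangle_ineq[of "F' xbar (a - xbar)" "F a - F xbar - F' xbar (a - xbar)"] by simp
    moreover have "norm (F' xbar (a - xbar)) \<le> norm (F' xbar) * norm (a - xbar)" by (rule norm_blinfun)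
    moreover have "\<eta>/2 * norm (a - xbar) \<le> \<eta> * norm (a - xbar)" using etapos by (intro mult_right_mono) auto
    ultimately show ?thesis using MV[OF a, of xbar] rpos unfolding L_def by (simp add: algebra_simps)
  qed
  define \<rho> where "\<rho> = r / 2"
  have rho: "0 < \<rho>" "\<rho> < r" using rpos unfolding \<rho>_def by auto
  define G where "G = 1 + 3 * L / m"
  define H where "H = 1 + 2 * L / (m * (1 - c))"
  have G1: "G \<ge> 1" using Lpos mpos unfolding G_def by simp
  have H1: "H \<ge> 1" using Lpos mpos c1 unfolding H_def by simp
  define \<epsilon>1 where "\<epsilon>1 = \<rho> / G"
  define \<epsilon> where "\<epsilon> = \<epsilon>1 / H"
  have e1pos: "\<epsilon>1 > 0" using rho G1 unfolding \<epsilon>1_def by simp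
  have epos: "\<epsilon> > 0" using e1pos H1 unfolding \<epsilon>_def by simp
  have e1G: "\<epsilon>1 * G = \<rho>" using G1 unfolding \<epsilon>1_def by simp
  have eH: "\<epsilon> * H = \<epsilon>1" using H1 unfolding \<epsilon>_def by simp
  have ee1: "\<epsilon> \<le> \<epsilon>1" using eH H1 e1pos epos by (metis mult_le_cancel_left1 less_le_not_le)
  show ?thesis
  proof (intro exI[of _ \<epsilon>] conjI allI impI)
    show "\<epsilon> > 0" by fact
    fix xs :: "nat \<Rightarrow> 'a"
    assume x0: "xs 0 \<in> ball xbar \<epsilon>" and steps: "\<forall>k. lap_step F F' Q (xs k) (xs (Suc k))"
    define n0 where "n0 = norm (xs 0 - xbar)"
    have n0e: "n0 < \<epsilon>" using x0 unfolding n0_def by (simp add: dist_norm norm_minus_commute)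
    define D where "D k = infdist (F (xs k)) Q" for k
    define K where "K = 2 * D 0 / m"
    have Dnn: "D k \<ge> 0" for k unfolding D_def by (rule infdist_nonneg)
    have Knn: "K \<ge> 0" using Dnn mpos unfolding K_def by simp
    have x0r: "norm (xs 0 - xbar) < r" using n0e ee1 e1G G1 rho e1pos unfolding n0_def
      by (smt (verit) mult_le_cancel_left1)
    have D0: "D 0 \<le> L * n0"
    proof -
      have "D 0 \<le> dist (F (xs 0)) (F xbar)" unfolding D_def by (rule infdist_le[OF Fxbar])
      then show ?thesis using Lip[OF x0r] unfolding n0_def by (simp add: dist_norm)
    qed
    have KL: "K \<le> 2 * L / m * n0" using D0 mpos unfolding K_def by (simp add: field_simps)
    have onestep: "D (Suc k) \<le> c * D k \<and> m * norm (xs (Suc k) - xs k) \<le> 2 * D k"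
      if xin: "norm (xs k - xbar) * G < \<rho>" for k
    proof (cases "F (xs k) \<in> Q")
      case True
      then have "xs (Suc k) = xs k" using steps unfolding lap_step_def by metis
      moreover have "D k = 0" using True unfolding D_def by simp
      moreover have "D (Suc k) = 0" using True \<open>xs (Suc k) = xs k\<close> unfolding D_def by simp
      ultimately show ?thesis by simp
    next
      case False
      then obtain y s where yP: "y \<in> proj_set Q (F (xs k))"
        and smin: "\<forall>s'. norm (F (xs k) + F' (xs k) s - y) \<le> norm (F (xs k) + F' (xs k) s' - y)"
        and nx: "xs (Suc k) = xs k + s"
        using steps unfolding lap_step_def by metis
      have st: "norm (F (xs k + s) - y) \<le> (cos \<beta> + 6 * \<eta> / m) * norm (F (xs k) - y)"
          "m * norm s \<le> 2 * norm (F (xs k) - y)"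
        using lap_one_step[OF Fxbar deriv E lowF lowD Lip mpos Lpos _ rho rdel ang' _ _ _ False yP smin]
          etapos beta xin unfolding G_def by auto
      have yQ: "y \<in> Q" and pk: "norm (F (xs k) - y) \<le> D k"
        using proj_le_infdist[OF yP] unfolding D_def by auto
      have "D (Suc k) \<le> dist (F (xs (Suc k))) y" unfolding D_def by (rule infdist_le[OF yQ])
      also have "\<dots> \<le> c * norm (F (xs k) - y)" using st(1) nx unfolding c_def by (simp add: dist_norm)
      also have "\<dots> \<le> c * D k" using pk c0 by (intro mult_left_mono) auto
      finally show ?thesis using st(2) pk nx by simp
    qed
    have inv: "norm (xs k - xbar) * G < \<rho> \<and> D k \<le> c ^ k * D 0 \<and> norm (xs k - xs 0) \<le> K * (1 - c ^ k) / (1 - c)" for k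
    proof (induction k)
      case 0
      have "n0 * G < \<epsilon>1 * G" using n0e ee1 G1 by (intro mult_strict_right_mono) auto
      then show ?case using e1G unfolding n0_def by simp
    next
      case (Suc k)
      then have IH: "norm (xs k - xbar) * G < \<rho>" "D k \<le> c ^ k * D 0"
        "norm (xs k - xs 0) \<le> K * (1 - c ^ k) / (1 - c)" by auto
      have os: "D (Suc k) \<le> c * D k" "m * norm (xs (Suc k) - xs k) \<le> 2 * D k" using onestep[OF IH(1)] by auto
      have dS: "D (Suc k) \<le> c ^ Suc k * D 0"
      proof -
        have "c * D k \<le> c * (c ^ k * D 0)" using IH(2) c0 by (intro mult_left_mono) auto
        then show ?thesis using os(1) by simp
      qed
      have stp: "norm (xs (Suc k) - xs k) \<le> K * c ^ k"
      proof -
        have "m * norm (xs (Suc k) - xs k) \<le> 2 * (c ^ k * D 0)" using os(2) IH(2) by linarith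
        then show ?thesis using mpos unfolding K_def by (simp add: field_simps)
      qed
      have tri: "norm (xs (Suc k) - xs 0) \<le> norm (xs k - xs 0) + norm (xs (Suc k) - xs k)"
      proof -
        have "xs (Suc k) - xs 0 = (xs k - xs 0) + (xs (Suc k) - xs k)" by simp
        then show ?thesis using norm_triangle_ineq by metis
      qed
      have geo: "K * (1 - c ^ k) / (1 - c) + K * c ^ k = K * (1 - c ^ Suc k) / (1 - c)"
        using c1 by (simp add: field_simps)
      have dist0: "norm (xs (Suc k) - xs 0) \<le> K * (1 - c ^ Suc k) / (1 - c)"
        using tri IH(3) stp geo by linarith
      have "K * (1 - c ^ Suc k) / (1 - c) \<le> K / (1 - c)"
        using Knn c1 c0 by (simp add: divide_right_mono mult_left_le)
      also have "\<dots> \<le> 2 * L / (m * (1 - c)) * n0"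
      proof -
        have "K / (1 - c) \<le> (2 * L / m * n0) / (1 - c)" using KL c1 by (intro divide_right_mono) auto
        also have "\<dots> = 2 * L / (m * (1 - c)) * n0" by simp
        finally show ?thesis .
      qed
      finally have d2: "norm (xs (Suc k) - xs 0) \<le> 2 * L / (m * (1 - c)) * n0" using dist0 by linarith
      have "norm (xs (Suc k) - xbar) \<le> n0 + norm (xs (Suc k) - xs 0)"
      proof -
        have "xs (Suc k) - xbar = (xs 0 - xbar) + (xs (Suc k) - xs 0)" by simp
        then show ?thesis unfolding n0_def using norm_triangle_ineq by metis
      qed
      also have "\<dots> \<le> n0 * H" using d2 unfolding H_def by (simp add: algebra_simps)
      also have "\<dots> < \<epsilon> * H" using n0e H1 by (intro mult_strict_right_mono) auto
      finally have "norm (xs (Suc k) - xbar) < \<epsilon>1" using eH by simp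
      then have "norm (xs (Suc k) - xbar) * G < \<epsilon>1 * G" using G1 by (intro mult_strict_right_mono) auto
      then show ?case using e1G dS dist0 by simp
    qed
    have stp: "norm (xs (Suc k) - xs k) \<le> K * c ^ k" for k
    proof -
      have "m * norm (xs (Suc k) - xs k) \<le> 2 * (c ^ k * D 0)" using onestep[of k] inv[of k] by linarith
      then show ?thesis using mpos unfolding K_def by (simp add: field_simps)
    qed
    have tail: "norm (xs (n + k) - xs k) \<le> K * c ^ k * (1 - c ^ n) / (1 - c)" for n k
    proof (induction n)
      case 0 then show ?case by simp
    next
      case (Suc n)
      have tri: "norm (xs (Suc n + k) - xs k) \<le> norm (xs (n + k) - xs k) + norm (xs (Suc (n + k)) - xs (n + k))"
      proof -
        have "xs (Suc n + k) - xs k = (xs (n + k) - xs k) + (xs (Suc (n + k)) - xs (n + k))" by simp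
        then show ?thesis using norm_triangle_ineq by metis
      qed
      have geo: "K * c ^ k * (1 - c ^ n) / (1 - c) + K * c ^ (n + k) = K * c ^ k * (1 - c ^ Suc n) / (1 - c)"
        using c1 by (simp add: field_simps power_add)
      show ?case using tri Suc stp[of "n + k"] geo by linarith
    qed
    have tail2: "norm (xs (n + k) - xs k) \<le> K * c ^ k / (1 - c)" for n k
    proof -
      have "K * c ^ k * (1 - c ^ n) / (1 - c) \<le> K * c ^ k / (1 - c)"
        using Knn c1 c0 by (simp add: divide_right_mono mult_left_le)
      then show ?thesis using tail[of n k] by linarith
    qed
    have lim0: "(\<lambda>k. K * c ^ k / (1 - c)) \<longlonglongrightarrow> 0"
      using c0 c1 by (intro tendsto_divide_zero tendsto_mult_right_zero LIMSEQ_power_zero) auto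
    have "Cauchy xs"
    proof (rule metric_CauchyI)
      fix e :: real assume "e > 0"
      then have "eventually (\<lambda>k. K * c ^ k / (1 - c) < e) sequentially"
        using lim0 order_tendstoD(2) by blast
      then obtain N where N: "\<And>k. k \<ge> N \<Longrightarrow> K * c ^ k / (1 - c) < e"
        unfolding eventually_sequentially by blast
      have "dist (xs p) (xs q) < e" if "p \<ge> N" "q \<ge> N" for p q
      proof (cases "p \<ge> q")
        case True
        have "xs p = xs ((p - q) + q)" using True by simp
        then have "dist (xs p) (xs q) \<le> K * c ^ q / (1 - c)" using tail2[of "p - q" q] by (simp add: dist_norm)
        then show ?thesis using N[OF that(2)] by linarith
      next
        case False
        have "xs q = xs ((q - p) + p)" using False by simp
        then have "dist (xs q) (xs p) \<le> K * c ^ p / (1 - c)" using tail2[of "q - p" p] by (simp add: dist_norm)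
        then show ?thesis using N[OF that(1)] by (simp add: dist_commute)
      qed
      then show "\<exists>M. \<forall>p\<ge>M. \<forall>q\<ge>M. dist (xs p) (xs q) < e" by blast
    qed
    then obtain xhat where xlim: "xs \<longlonglongrightarrow> xhat"
      using Cauchy_convergent_iff convergent_def by blast
    have bnd: "norm (xs k - xhat) \<le> K * c ^ k / (1 - c)" for k
    proof -
      have "(\<lambda>n. norm (xs (n + k) - xs k)) \<longlonglongrightarrow> norm (xhat - xs k)"
        by (intro tendsto_norm tendsto_diff tendsto_const LIMSEQ_ignore_initial_segment xlim)
      then have "norm (xhat - xs k) \<le> K * c ^ k / (1 - c)"
        by (rule LIMSEQ_le_const2) (use tail2 in auto)
      then show ?thesis by (simp add: norm_minus_commute)
    qed
    have "norm (xhat - xbar) \<le> \<rho>"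
    proof -
      have "(\<lambda>n. norm (xs n - xbar)) \<longlonglongrightarrow> norm (xhat - xbar)"
        by (intro tendsto_norm tendsto_diff tendsto_const xlim)
      moreover have "norm (xs n - xbar) \<le> \<rho>" for n
      proof -
        have "norm (xs n - xbar) \<le> norm (xs n - xbar) * G" using G1 by (simp add: mult_le_cancel_left1)
        then show ?thesis using inv[of n] by linarith
      qed
      ultimately show ?thesis using LIMSEQ_le_const2 by blast
    qed
    then have xhr: "norm (xhat - xbar) < r" using rho by linarith
    have "isCont F xhat" using deriv[OF xhr] has_derivative_continuous by blast
    then have "(\<lambda>k. F (xs k)) \<longlonglongrightarrow> F xhat" using xlim isCont_tendsto_compose by blast
    then have Dlim: "D \<longlonglongrightarrow> infdist (F xhat) Q" unfolding D_def by (rule tendsto_infdist)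
    have "(\<lambda>k. c ^ k * D 0) \<longlonglongrightarrow> 0"
      using c0 c1 by (intro tendsto_mult_left_zero LIMSEQ_power_zero) auto
    then have "infdist (F xhat) Q \<le> 0"
      by (rule LIMSEQ_le[OF Dlim]) (use inv in auto)
    then have "infdist (F xhat) Q = 0" using infdist_nonneg[of "F xhat" Q] by linarith
    then have FQ: "F xhat \<in> Q" using in_closed_iff_infdist_zero[OF Q_closed Q_ne] by blast
    have "converges_linearly xs xhat"
    proof -
      have p1: "0 < K / (1 - c) + 1" using Knn c1 by (simp add: add_nonneg_pos)
      have p2: "norm (xs k - xhat) < (K / (1 - c) + 1) * c ^ k" for k
      proof -
        have "0 < c ^ k" using c0 by simp
        then have "K * c ^ k / (1 - c) < (K / (1 - c) + 1) * c ^ k" by (simp add: algebra_simps)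
        then show ?thesis using bnd[of k] by linarith
      qed
      show ?thesis unfolding converges_linearly_def using p1 p2 c0 c1 by blast
    qed
    then show "\<exists>xhat. F xhat \<in> Q \<and> converges_linearly xs xhat" using FQ by blast
  qed
qed

end
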